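(* Let $n\ge 5$ and let $\sigma$ be a maximal simplex of $\Delta_n$ that covers all places. If $|N(w)\cap\sigma|\ge 2$ for all $w\in\sigma$, then there exist $v,w\in\sigma$ with $v$ adjacent to $w$ in $\mathbb{I}_n$ and $\sigma=N(v)\cup N(w)$.
   Context: $\mathbb{I}_n$ is the $n$-dimensional hypercube graph on vertex set $\{0,1\}^n$ (adjacent iff differing in exactly one coordinate), with Hamming distance $d(v,w)=\#\{i: v(i)\ne w(i)\}$, $v(i)$ the $i$-th coordinate. $\Delta_n=\mathcal{VR}(\mathbb{I}_n;3)$ is the simplicial complex whose simplices are the subsets $\sigma\subseteq\{0,1\}^n$ with $d(x,y)\le 3$ for all $x,y\in\sigma$. A simplex $\sigma$ covers all places if for each $i\in[n]=\{1,\dots,n\}$ there are $v,w\in\sigma$ with $v(i)=1$ and $w(i)=0$. $N(v)$ denotes the set of the $n$ vertices adjacent to $v$ in $\mathbb{I}_n$. *)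

theory Defs
  imports Main
begin

text \<open>A vertex of the n-cube {0,1}^n is encoded as a function
  v :: nat => bool with v i = False for i outside {1..n}; v i = True means
  the i-th coordinate is 1.\<close>

definition cube_vertices :: "nat \<Rightarrow> (nat \<Rightarrow> bool) set" where
  "cube_vertices n = {v. \<forall>i. i \<notin> {1..n} \<longrightarrow> \<not> v i}"

definition hdist :: "nat \<Rightarrow> (nat \<Rightarrow> bool) \<Rightarrow> (nat \<Rightarrow> bool) \<Rightarrow> nat" where
  "hdist n v w = card {i \<in> {1..n}. v i \<noteq> w i}"

definition cube_adj :: "nat \<Rightarrow> (nat \<Rightarrow> bool) \<Rightarrow> (nat \<Rightarrow> bool) \<Rightarrow> bool" where
  "cube_adj n v w \<longleftrightarrow> v \<in> cube_vertices n \<and> w \<in> cube_vertices n \<and> hdist n v w = 1"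

definition nbhd :: "nat \<Rightarrow> (nat \<Rightarrow> bool) \<Rightarrow> (nat \<Rightarrow> bool) set" where
  "nbhd n v = {w. cube_adj n v w}"

text \<open>Simplices of VR(I_n;3): nonempty subsets of the vertex set with pairwise
  distance at most 3.\<close>
definition is_simplex :: "nat \<Rightarrow> (nat \<Rightarrow> bool) set \<Rightarrow> bool" where
  "is_simplex n \<sigma> \<longleftrightarrow> \<sigma> \<noteq> {} \<and> \<sigma> \<subseteq> cube_vertices n \<and>
     (\<forall>x\<in>\<sigma>. \<forall>y\<in>\<sigma>. hdist n x y \<le> 3)"

definition maximal_simplex :: "nat \<Rightarrow> (nat \<Rightarrow> bool) set \<Rightarrow> bool" where
  "maximal_simplex n \<sigma> \<longleftrightarrow> is_simplex n \<sigma> \<and>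
     (\<forall>\<tau>. is_simplex n \<tau> \<and> \<sigma> \<subseteq> \<tau> \<longrightarrow> \<tau> = \<sigma>)"

definition covers_all_places :: "nat \<Rightarrow> (nat \<Rightarrow> bool) set \<Rightarrow> bool" where
  "covers_all_places n \<sigma> \<longleftrightarrow>
     (\<forall>i\<in>{1..n}. \<exists>v\<in>\<sigma>. \<exists>w\<in>\<sigma>. v i \<and> \<not> w i)"

end

theory Submission
  imports Defs
begin

definition sd :: "'a set \<Rightarrow> 'a set \<Rightarrow> 'a set" where
  "sd A B = (A - B) \<union> (B - A)"

lemma sd_comm: "sd A B = sd B A" unfolding sd_def by blast
lemma sd_assoc: "sd (sd A B) C = sd A (sd B C)" unfolding sd_def by blast
lemma sd_self[simp]: "sd A A = {}" unfolding sd_def by blast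
lemma sd_empty[simp]: "sd A {} = A" "sd {} A = A" unfolding sd_def by blast+
lemma sd_eq_empty: "sd A B = {} \<longleftrightarrow> A = B" unfolding sd_def by blast
lemma sd_cancel[simp]: "sd A (sd A B) = B" "sd (sd A B) B = A" unfolding sd_def by blast+
lemma sd_finite[simp]: "finite A \<Longrightarrow> finite B \<Longrightarrow> finite (sd A B)" unfolding sd_def by blast
lemma sd_sub: "A \<subseteq> K \<Longrightarrow> B \<subseteq> K \<Longrightarrow> sd A B \<subseteq> K" unfolding sd_def by blast
lemma sd_mem: "x \<in> sd A B \<longleftrightarrow> (x \<in> A) \<noteq> (x \<in> B)" unfolding sd_def by blast

lemma card_sd: assumes "finite A" "finite B"
  shows "card (sd A B) + 2 * card (A \<inter> B) = card A + card B"
proof -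
  have "card (sd A B) = card (A - B) + card (B - A)"
    unfolding sd_def using assms by (subst card_Un_disjoint) auto
  moreover have "card A = card (A - B) + card (A \<inter> B)"
    using assms card_Int_Diff[of A B] by simp
  moreover have "card B = card (B - A) + card (A \<inter> B)"
    using assms card_Int_Diff[of B A] by (simp add: inf_commute)
  ultimately show ?thesis by simp
qed

lemma sd_tri: assumes "finite A" "finite B" "finite C"
  shows "card (sd A C) \<le> card (sd A B) + card (sd B C)"
proof -
  have "sd A C \<subseteq> sd A B \<union> sd B C" unfolding sd_def by blast
  hence "card (sd A C) \<le> card (sd A B \<union> sd B C)" using assms by (intro card_mono) auto
  also have "\<dots> \<le> card (sd A B) + card (sd B C)" by (rule card_Un_le)
  finally show ?thesis .
qed

lemma par1: assumes "finite A" "finite B" "card (sd A B) = 1" shows "even (card A) \<longleftrightarrow> odd (card B)"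
proof -
  have "card (sd A B) + 2 * card (A \<inter> B) = card A + card B" using assms(1,2) by (rule card_sd)
  thus ?thesis using assms(3) by presburger
qed

lemma par2: assumes "finite A" "finite B" "even (card A)" "even (card B)" shows "even (card (sd A B))"
proof -
  have "card (sd A B) + 2 * card (A \<inter> B) = card A + card B" using assms by (intro card_sd)
  thus ?thesis using assms(3,4) by presburger
qed

lemma triple: "(i \<noteq> j \<and> i \<noteq> k \<and> j \<noteq> k \<and> sd {i} (sd {k} {j}) = {i,j,k}) \<or> (\<exists>x. sd {i} (sd {k} {j}) = {x})"
proof (cases "i = j")
  case True thus ?thesis unfolding sd_def by auto
next
  case f1: False show ?thesis
  proof (cases "i = k")
    case True thus ?thesis unfolding sd_def by auto
  next
    case f2: False show ?thesis
    proof (cases "j = k")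
      case True thus ?thesis unfolding sd_def by auto
    next
      case False thus ?thesis using f1 f2 unfolding sd_def by auto
    qed
  qed
qed

lemma sd_sd1: "sd (sd A B) (sd A C) = sd B C" unfolding sd_def by blast
lemma sd_sd2: "sd (sd B A) (sd C A) = sd B C" unfolding sd_def by blast
lemma sd_chain: "sd (sd A B) (sd B C) = sd A C" unfolding sd_def by blast
lemma card1: "card X = 1 \<Longrightarrow> \<exists>x. X = {x}" by (simp add: card_1_singleton_iff)

lemma cube_ext:
  assumes K: "\<forall>A\<in>C. sd A A0 \<subseteq> K" and S: "S1 \<in> C" "S2 \<in> C" "S1 \<noteq> S2"
    and c: "card (sd B S1) = 1" "card (sd B S2) = 1"
  shows "sd B A0 \<subseteq> K"
proof -
  obtain x where x: "sd B S1 = {x}" using card1[OF c(1)] by blast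
  obtain y where y: "sd B S2 = {y}" using card1[OF c(2)] by blast
  have e: "sd S1 S2 = sd {x} {y}" using x y sd_sd1[of B S1 S2] by simp
  have "sd S1 S2 = sd (sd S1 A0) (sd S2 A0)" by (simp add: sd_sd2)
  moreover have "sd S1 A0 \<subseteq> K" "sd S2 A0 \<subseteq> K" using K S by auto
  hence "sd (sd S1 A0) (sd S2 A0) \<subseteq> K" by (rule sd_sub)
  ultimately have "sd {x} {y} \<subseteq> K" using e by simp
  moreover have "x \<noteq> y"
  proof
    assume "x = y" then have "sd S1 S2 = {}" using e by simp
    thus False using S(3) by (simp add: sd_eq_empty)
  qed
  ultimately have "x \<in> K" unfolding sd_def by blast
  have "sd B A0 = sd {x} (sd S1 A0)" using x sd_chain[of B S1 A0] by simp
  thus ?thesis using K S \<open>x \<in> K\<close> sd_sub[of "{x}" K "sd S1 A0"] by auto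
qed

lemma card2_mem: "card S = 2 \<Longrightarrow> b \<in> S \<Longrightarrow> \<exists>c. S = {b,c} \<and> c \<noteq> b"
  by (metis card_2_iff insert_commute insertE singletonD)

lemma inter1: assumes "finite S" "finite T" "card S = 2" "card T = 2" "card (sd S T) = 2"
  shows "\<exists>e. S \<inter> T = {e}"
proof -
  have "card (sd S T) + 2 * card (S \<inter> T) = card S + card T" using assms(1,2) by (rule card_sd)
  hence "card (S \<inter> T) = 1" using assms by simp
  thus ?thesis by (rule card1)
qed

lemma star_center: assumes "card T = 2" "a \<in> T" shows "card (sd T {a}) = 1"
proof -
  have "sd T {a} = T - {a}" using assms(2) unfolding sd_def by blast
  thus ?thesis using assms by (simp add: card_Diff_singleton_if)
qed

lemma star:
  fixes C :: "'a set set"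
  assumes fin: "\<forall>A\<in>C. finite A"
   and pair: "\<forall>A\<in>C. \<forall>B\<in>C. A \<noteq> B \<longrightarrow> card (sd A B) = 2"
   and A0: "A0 \<in> C" and A1: "A1 \<in> C" "A1 \<noteq> A0"
  shows "(\<exists>a \<in> sd A0 A1. \<forall>A\<in>C. card (sd A (sd A0 {a})) = 1) \<or>
         (\<exists>K. finite K \<and> card K \<le> 3 \<and> (\<forall>A\<in>C. sd A A0 \<subseteq> K))"
proof -
  define T where "T A = sd A0 A" for A
  have T2: "card (T A) = 2" if "A \<in> C" "A \<noteq> A0" for A
    using pair A0 that unfolding T_def by (metis sd_comm)
  have Tfin: "finite (T A)" if "A \<in> C" for A using fin A0 that unfolding T_def by simp
  have TT: "\<exists>e. T A \<inter> T B = {e}" if "A \<in> C" "B \<in> C" "A \<noteq> A0" "B \<noteq> A0" "A \<noteq> B" for A B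
  proof -
    have "sd (T A) (T B) = sd A B" unfolding T_def by (rule sd_sd1)
    hence "card (sd (T A) (T B)) = 2" using pair that by simp
    thus ?thesis by (rule inter1[OF Tfin[OF that(1)] Tfin[OF that(2)] T2[OF that(1,3)] T2[OF that(2,4)]])
  qed
  obtain a b where ab: "a \<noteq> b" "T A1 = {a,b}" using T2[OF A1] by (metis card_2_iff)
  have left: "?thesis" if c: "c \<in> T A1" "\<forall>A\<in>C. A \<noteq> A0 \<longrightarrow> c \<in> T A" for c
  proof (rule disjI1, rule bexI[of _ c])
    show "c \<in> sd A0 A1" using c unfolding T_def by simp
    show "\<forall>A\<in>C. card (sd A (sd A0 {c})) = 1"
    proof
      fix A assume A: "A \<in> C"
      show "card (sd A (sd A0 {c})) = 1"
      proof (cases "A = A0")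
        case True thus ?thesis by simp
      next
        case False
        have "sd A (sd A0 {c}) = sd (T A) {c}" unfolding T_def sd_def by blast
        moreover have "c \<in> T A" using c(2) A False by blast
        hence "card (sd (T A) {c}) = 1" by (rule star_center[OF T2[OF A False]])
        ultimately show ?thesis by simp
      qed
    qed
  qed
  show ?thesis
  proof (cases "\<forall>A\<in>C. A \<noteq> A0 \<longrightarrow> a \<in> T A")
    case True thus ?thesis using left ab by auto
  next
    case Fa: False
    show ?thesis
    proof (cases "\<forall>A\<in>C. A \<noteq> A0 \<longrightarrow> b \<in> T A")
      case True thus ?thesis using left ab by auto
    next
      case Fb: False
      obtain A2 where A2: "A2 \<in> C" "A2 \<noteq> A0" "a \<notin> T A2" using Fa by blast
      obtain A3 where A3: "A3 \<in> C" "A3 \<noteq> A0" "b \<notin> T A3" using Fb by blast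
      have "A2 \<noteq> A1" using A2 ab by auto
      then obtain e where "T A2 \<inter> T A1 = {e}" using TT[OF A2(1) A1(1) A2(2) A1(2)] by blast
      hence "b \<in> T A2" using ab A2 by auto
      then obtain c where c: "T A2 = {b,c}" "c \<noteq> b" using card2_mem[OF T2[OF A2(1,2)] \<open>b \<in> T A2\<close>] by blast
      have ca: "c \<noteq> a" using c A2 by auto
      have "A3 \<noteq> A1" using A3 ab by auto
      then obtain e where "T A3 \<inter> T A1 = {e}" using TT[OF A3(1) A1(1) A3(2) A1(2)] by blast
      hence "a \<in> T A3" using ab A3 by auto
      then obtain d where d: "T A3 = {a,d}" "d \<noteq> a" using card2_mem[OF T2[OF A3(1,2)] \<open>a \<in> T A3\<close>] by blast
      have db: "d \<noteq> b" using d A3 by auto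
      have "A2 \<noteq> A3" using A3 \<open>b \<in> T A2\<close> by auto
      then obtain f where "T A2 \<inter> T A3 = {f}" using TT[OF A2(1) A3(1) A2(2) A3(2)] by blast
      have cd: "c = d"
      proof (rule ccontr)
        assume "c \<noteq> d"
        hence "T A2 \<inter> T A3 = {}" using c d ca db ab(1) by auto
        thus False using \<open>T A2 \<inter> T A3 = {f}\<close> by simp
      qed
      show ?thesis
      proof (rule disjI2, rule exI[of _ "{a,b,c}"], intro conjI)
        show "finite {a,b,c}" by simp
        show "card {a,b,c} \<le> 3" by (simp add: card_insert_if)
        show "\<forall>A\<in>C. sd A A0 \<subseteq> {a, b, c}"
        proof
          fix A assume A: "A \<in> C"
          show "sd A A0 \<subseteq> {a,b,c}"
          proof (cases "A = A0")
            case True thus ?thesis by simp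
          next
            case False
            have eq: "sd A A0 = T A" unfolding T_def by (rule sd_comm)
            show ?thesis
            proof (rule ccontr)
              assume "\<not> sd A A0 \<subseteq> {a,b,c}"
              then obtain z where z: "z \<in> T A" "z \<notin> {a,b,c}" using eq by auto
              obtain w where w: "T A = {z,w}" "w \<noteq> z" using card2_mem[OF T2[OF A False] z(1)] by blast
              have "A \<noteq> A1" using z ab by auto
              then obtain e1 where e1: "T A \<inter> T A1 = {e1}" using TT[OF A A1(1) False A1(2)] by blast
              have "A \<noteq> A2" using z c by auto
              then obtain e2 where e2: "T A \<inter> T A2 = {e2}" using TT[OF A A2(1) False A2(2)] by blast
              have "A \<noteq> A3" using z d cd by auto
              then obtain e3 where e3: "T A \<inter> T A3 = {e3}" using TT[OF A A3(1) False A3(2)] by blast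
              have "e1 \<in> T A" "e1 \<in> T A1" using e1 by auto
              hence "e1 \<in> {z,w}" "e1 \<in> {a,b}" using w ab by auto
              hence "w \<in> {a,b}" using z(2) by auto
              moreover have "e2 \<in> T A" "e2 \<in> T A2" using e2 by auto
              hence "e2 \<in> {z,w}" "e2 \<in> {b,c}" using w c by auto
              hence "w \<in> {b,c}" using z(2) by auto
              moreover have "e3 \<in> T A" "e3 \<in> T A3" using e3 by auto
              hence "e3 \<in> {z,w}" "e3 \<in> {a,c}" using w d cd by auto
              hence "w \<in> {a,c}" using z(2) by auto
              ultimately show False using ab(1) c(2) ca by auto
            qed
          qed
        qed
      qed
    qed
  qed
qed

lemma par3: assumes "finite A" "finite B" "even (card A) = even (card B)" shows "even (card (sd A B))"
proof -
  have "card (sd A B) + 2 * card (A \<inter> B) = card A + card B" using assms(1,2) by (rule card_sd)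
  thus ?thesis using assms(3) by presburger
qed

lemma sd_four: "sd U W = sd (sd X U) (sd (sd X Y) (sd Y W))" unfolding sd_def by blast

lemma tri_sub: assumes "sd U W = sd {i} (sd {k} {j})" "card (sd U W) = 3"
  shows "i \<in> sd U W" "j \<in> sd U W"
proof -
  have "i \<noteq> j \<and> i \<noteq> k \<and> j \<noteq> k \<and> sd {i} (sd {k} {j}) = {i,j,k}"
  proof -
    have "\<not> (\<exists>x. sd {i} (sd {k} {j}) = {x})"
    proof
      assume "\<exists>x. sd {i} (sd {k} {j}) = {x}"
      then obtain x where "sd U W = {x}" using assms(1) by auto
      thus False using assms(2) by simp
    qed
    thus ?thesis using triple[of i j k] by blast
  qed
  thus "i \<in> sd U W" "j \<in> sd U W" using assms(1) by auto
qed

lemma core: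
  fixes F :: "nat set set" and n :: nat
  assumes sub: "\<forall>A\<in>F. A \<subseteq> {1..n}"
   and dist: "\<forall>A\<in>F. \<forall>B\<in>F. card (sd A B) \<le> 3"
   and deg: "\<forall>A\<in>F. \<exists>B1\<in>F. \<exists>B2\<in>F. B1 \<noteq> B2 \<and> card (sd A B1) = 1 \<and> card (sd A B2) = 1"
   and cov: "\<forall>i\<in>{1..n}. \<exists>A\<in>F. \<exists>B\<in>F. i \<in> A \<and> i \<notin> B"
   and n: "n \<ge> 4"
  shows "\<exists>U W. U \<subseteq> {1..n} \<and> W \<subseteq> {1..n} \<and> card (sd U W) = 1 \<and>
            (\<forall>A\<in>F. card (sd A U) = 1 \<or> card (sd A W) = 1)"
proof -
  have fin: "finite A" if "A \<in> F" for A using sub that finite_subset by blast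
  have nosmall: False if K: "finite K" "card K \<le> 3" "\<forall>X\<in>F. sd X A0 \<subseteq> K" for K A0
  proof -
    have "\<not> {1..n} \<subseteq> K"
    proof
      assume "{1..n} \<subseteq> K"
      hence "card {1..n} \<le> card K" by (rule card_mono[OF K(1)])
      thus False using K(2) n by simp
    qed
    then obtain x where x: "x \<in> {1..n}" "x \<notin> K" by blast
    then obtain A B where AB: "A \<in> F" "B \<in> F" "x \<in> A" "x \<notin> B" using cov by blast
    have "x \<notin> sd A A0" "x \<notin> sd B A0" using K(3) AB x by auto
    thus False using AB unfolding sd_def by blast
  qed
  define P where "P = {A\<in>F. even (card A)}"
  define Q where "Q = {A\<in>F. odd (card A)}"
  have PQ: "F \<subseteq> P \<union> Q" "P \<subseteq> F" "Q \<subseteq> F" unfolding P_def Q_def by auto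
  have nb: "(A \<in> P \<longleftrightarrow> B \<in> Q) \<and> (A \<in> Q \<longleftrightarrow> B \<in> P)"
    if "A \<in> F" "B \<in> F" "card (sd A B) = 1" for A B
    using par1[OF fin[OF that(1)] fin[OF that(2)] that(3)] that unfolding P_def Q_def by auto
  have pair: "card (sd A B) = 2" if "A \<in> F" "B \<in> F" "A \<noteq> B" "even (card A) = even (card B)" for A B
  proof -
    have "even (card (sd A B))" using par3 fin that by blast
    moreover have "card (sd A B) \<le> 3" using dist that by blast
    moreover have "card (sd A B) \<noteq> 0" using that fin sd_eq_empty[of A B] by (simp add: card_eq_0_iff)
    ultimately show ?thesis by presburger
  qed
  have cls: "\<exists>U. U \<subseteq> {1..n} \<and> (\<forall>A\<in>C. card (sd A U) = 1)"
    if C: "C \<subseteq> F" "C' \<subseteq> F" "F \<subseteq> C \<union> C'" "\<forall>A\<in>C. \<forall>B\<in>C. A \<noteq> B \<longrightarrow> card (sd A B) = 2"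
      "\<forall>B\<in>C'. \<forall>A\<in>F. card (sd B A) = 1 \<longrightarrow> A \<in> C" "C' \<noteq> {}" for C C'
  proof -
    obtain B where B: "B \<in> C'" using C(6) by blast
    then obtain B1 B2 where B12: "B1 \<in> F" "B2 \<in> F" "B1 \<noteq> B2" "card (sd B B1) = 1" "card (sd B B2) = 1"
      using deg C(2) by blast
    have B12C: "B1 \<in> C" "B2 \<in> C" using C(5) B B12 by auto
    have finC: "\<forall>A\<in>C. finite A" using C(1) fin by blast
    from star[OF finC C(4) B12C(1) B12C(2) B12(3)[symmetric]]
    show ?thesis
    proof
      assume "\<exists>a\<in>sd B1 B2. \<forall>A\<in>C. card (sd A (sd B1 {a})) = 1"
      then obtain a where a: "a \<in> sd B1 B2" "\<forall>A\<in>C. card (sd A (sd B1 {a})) = 1" by blast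
      have "B1 \<subseteq> {1..n}" "B2 \<subseteq> {1..n}" using sub B12 by auto
      hence "sd B1 B2 \<subseteq> {1..n}" by (rule sd_sub)
      hence "sd B1 {a} \<subseteq> {1..n}" using a(1) \<open>B1 \<subseteq> {1..n}\<close> by (intro sd_sub) auto
      thus ?thesis using a(2) by blast
    next
      assume "\<exists>K. finite K \<and> card K \<le> 3 \<and> (\<forall>A\<in>C. sd A B1 \<subseteq> K)"
      then obtain K where K: "finite K" "card K \<le> 3" "\<forall>A\<in>C. sd A B1 \<subseteq> K" by blast
      have "\<forall>X\<in>F. sd X B1 \<subseteq> K"
      proof
        fix X assume X: "X \<in> F"
        show "sd X B1 \<subseteq> K"
        proof (cases "X \<in> C")
          case True thus ?thesis using K by blast
        next
          case False
          hence XC': "X \<in> C'" using X C(3) by blast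
          then obtain Y1 Y2 where Y: "Y1 \<in> F" "Y2 \<in> F" "Y1 \<noteq> Y2" "card (sd X Y1) = 1" "card (sd X Y2) = 1"
            using deg X by blast
          have "Y1 \<in> C" "Y2 \<in> C" using C(5) XC' Y by auto
          thus ?thesis using cube_ext[OF K(3) _ _ Y(3) Y(4) Y(5)] by blast
        qed
      qed
      thus ?thesis using nosmall[OF K(1) K(2)] by blast
    qed
  qed
  obtain X0 where X0: "X0 \<in> F" using cov n by fastforce
  then obtain Y0 where Y0: "Y0 \<in> F" "card (sd X0 Y0) = 1" using deg by blast
  have PQne: "P \<noteq> {}" "Q \<noteq> {}" using nb[OF X0 Y0] X0 Y0 PQ(1) by auto
  obtain U where U: "U \<subseteq> {1..n}" "\<forall>A\<in>P. card (sd A U) = 1"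
  proof -
    have "\<forall>A\<in>P. \<forall>B\<in>P. A \<noteq> B \<longrightarrow> card (sd A B) = 2" using pair unfolding P_def by auto
    moreover have "\<forall>B\<in>Q. \<forall>A\<in>F. card (sd B A) = 1 \<longrightarrow> A \<in> P" using nb PQ by blast
    ultimately show ?thesis using cls[of P Q] PQ PQne that by auto
  qed
  obtain W where W: "W \<subseteq> {1..n}" "\<forall>A\<in>Q. card (sd A W) = 1"
  proof -
    have "\<forall>A\<in>Q. \<forall>B\<in>Q. A \<noteq> B \<longrightarrow> card (sd A B) = 2" using pair unfolding Q_def by auto
    moreover have "\<forall>B\<in>P. \<forall>A\<in>F. card (sd B A) = 1 \<longrightarrow> A \<in> Q" using nb PQ by blast
    moreover have "F \<subseteq> Q \<union> P" using PQ by blast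
    ultimately show ?thesis using cls[of Q P] PQ PQne that by auto
  qed
  have decomp: "sd U W = sd {i} (sd {k} {j})" if "X \<in> P" "Y \<in> Q" "card (sd X Y) = 1"
    "sd X U = {i}" "sd Y W = {j}" "sd X Y = {k}" for X Y i j k
    using sd_four[of U W X Y] that by simp
  have nbr: "\<exists>Y\<in>F. card (sd X Y) = 1" if "X \<in> F" for X using deg that by blast
  obtain Y1 where Y1: "Y1 \<in> F" "card (sd X0 Y1) = 1" using nbr[OF X0] by blast
  obtain X Y where XY: "X \<in> P" "Y \<in> Q" "card (sd X Y) = 1"
  proof (cases "X0 \<in> P")
    case True thus ?thesis using that Y1 nb[OF X0 Y1(1) Y1(2)] by blast
  next
    case False
    hence "X0 \<in> Q" "Y1 \<in> P" using nb[OF X0 Y1(1) Y1(2)] X0 PQ by auto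
    moreover have "card (sd Y1 X0) = 1" using Y1 sd_comm by metis
    ultimately show ?thesis using that by blast
  qed
  obtain i where i: "sd X U = {i}" using card1 U XY by blast
  obtain j where j: "sd Y W = {j}" using card1 W XY by blast
  obtain k where k: "sd X Y = {k}" using card1 XY by blast
  have D: "sd U W = sd {i} (sd {k} {j})" using decomp[OF XY i j k] .
  show ?thesis
  proof (cases "\<exists>x. sd U W = {x}")
    case True
    hence "card (sd U W) = 1" by auto
    moreover have "\<forall>A\<in>F. card (sd A U) = 1 \<or> card (sd A W) = 1" using U W PQ by blast
    ultimately show ?thesis using U W by blast
  next
    case False
    hence D3: "card (sd U W) = 3" using triple[of i j k] D by auto
    have "\<forall>Z\<in>F. sd Z U \<subseteq> sd U W"
    proof
      fix Z assume Z: "Z \<in> F"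
      then obtain Z' where Z': "Z' \<in> F" "card (sd Z Z') = 1" using nbr by blast
      show "sd Z U \<subseteq> sd U W"
      proof (cases "Z \<in> P")
        case True
        hence "Z' \<in> Q" using nb[OF Z Z'(1) Z'(2)] by blast
        obtain i' where i': "sd Z U = {i'}" using card1 U True by blast
        obtain j' where j': "sd Z' W = {j'}" using card1 W \<open>Z' \<in> Q\<close> by blast
        obtain k' where k': "sd Z Z' = {k'}" using card1 Z' by blast
        have "i' \<in> sd U W" using tri_sub(1)[OF decomp[OF True \<open>Z' \<in> Q\<close> Z'(2) i' j' k'] D3] .
        thus ?thesis using i' by simp
      next
        case False
        hence ZQ: "Z \<in> Q" using Z PQ by blast
        hence "Z' \<in> P" using nb[OF Z Z'(1) Z'(2)] by blast
        have Z'2: "card (sd Z' Z) = 1" using Z' sd_comm by metis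
        obtain i' where i': "sd Z' U = {i'}" using card1 U \<open>Z' \<in> P\<close> by blast
        obtain j' where j': "sd Z W = {j'}" using card1 W ZQ by blast
        obtain k' where k': "sd Z' Z = {k'}" using card1 Z'2 by blast
        have "j' \<in> sd U W" using tri_sub(2)[OF decomp[OF \<open>Z' \<in> P\<close> ZQ Z'2 i' j' k'] D3] .
        moreover have "sd Z U = sd (sd Z W) (sd U W)" unfolding sd_def by blast
        ultimately show ?thesis using j' unfolding sd_def by auto
      qed
    qed
    moreover have "finite (sd U W)" using U W finite_subset by (metis finite_atLeastAtMost sd_finite)
    ultimately show ?thesis using nosmall[of "sd U W" U] D3 by simp
  qed
qed

lemma hd: assumes "v \<in> cube_vertices n" "w \<in> cube_vertices n"
  shows "hdist n v w = card (sd (Collect v) (Collect w))"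
proof -
  have "{i \<in> {1..n}. v i \<noteq> w i} = sd (Collect v) (Collect w)"
    using assms unfolding cube_vertices_def sd_def by auto
  thus ?thesis unfolding hdist_def by simp
qed

lemma supp_sub: "v \<in> cube_vertices n \<Longrightarrow> Collect v \<subseteq> {1..n}"
  unfolding cube_vertices_def by auto

lemma two_elems: assumes "2 \<le> card S" shows "\<exists>x y. x \<in> S \<and> y \<in> S \<and> x \<noteq> y"
proof -
  have "finite S" using assms card.infinite by fastforce
  have "S \<noteq> {}" using assms by auto
  then obtain x where x: "x \<in> S" by blast
  have "card (S - {x}) \<ge> 1" using assms x \<open>finite S\<close> by (simp add: card_Diff_singleton)
  have "S - {x} \<noteq> {}"
  proof
    assume h: "S - {x} = {}"
    have "card (S - {x}) = 0" unfolding h by simp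
    then show False using \<open>card (S - {x}) \<ge> 1\<close> by simp
  qed
  thus ?thesis using x by blast
qed

lemma adj_sym: "cube_adj n v w \<Longrightarrow> cube_adj n w v"
proof -
  have "{i \<in> {1..n}. v i \<noteq> w i} = {i \<in> {1..n}. w i \<noteq> v i}" by blast
  thus "cube_adj n v w \<Longrightarrow> cube_adj n w v" unfolding cube_adj_def hdist_def by simp
qed

theorem mainTheorem11:
  fixes n :: nat and \<sigma> :: "(nat \<Rightarrow> bool) set"
  assumes "n \<ge> 5"
    and "maximal_simplex n \<sigma>"
    and "covers_all_places n \<sigma>"
    and "\<forall>w\<in>\<sigma>. card (nbhd n w \<inter> \<sigma>) \<ge> 2"
  shows "\<exists>v\<in>\<sigma>. \<exists>w\<in>\<sigma>. cube_adj n v w \<and> \<sigma> = nbhd n v \<union> nbhd n w"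
proof -
  note n = assms(1)
  have simp: "is_simplex n \<sigma>" and maxi: "\<And>\<tau>. is_simplex n \<tau> \<Longrightarrow> \<sigma> \<subseteq> \<tau> \<Longrightarrow> \<tau> = \<sigma>"
    using assms(2) unfolding maximal_simplex_def by auto
  have sc: "\<sigma> \<subseteq> cube_vertices n" using simp unfolding is_simplex_def by auto
  define F where "F = Collect ` \<sigma>"
  have sub: "\<forall>A\<in>F. A \<subseteq> {1..n}" unfolding F_def using sc supp_sub by blast
  have dist: "\<forall>A\<in>F. \<forall>B\<in>F. card (sd A B) \<le> 3"
  proof (intro ballI)
    fix A B assume "A \<in> F" "B \<in> F"
    then obtain x y where xy: "x \<in> \<sigma>" "y \<in> \<sigma>" "A = Collect x" "B = Collect y" unfolding F_def by blast
    have "hdist n x y \<le> 3" using simp xy unfolding is_simplex_def by blast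
    moreover have "x \<in> cube_vertices n" "y \<in> cube_vertices n" using sc xy by auto
    ultimately show "card (sd A B) \<le> 3" using hd[of x n y] xy by simp
  qed
  have deg: "\<forall>A\<in>F. \<exists>B1\<in>F. \<exists>B2\<in>F. B1 \<noteq> B2 \<and> card (sd A B1) = 1 \<and> card (sd A B2) = 1"
  proof
    fix A assume "A \<in> F"
    then obtain w where w: "w \<in> \<sigma>" "A = Collect w" unfolding F_def by blast
    obtain y1 y2 where y: "y1 \<in> nbhd n w \<inter> \<sigma>" "y2 \<in> nbhd n w \<inter> \<sigma>" "y1 \<noteq> y2"
      using two_elems assms(4) w by blast
    have a1: "cube_adj n w y1" "cube_adj n w y2" using y unfolding nbhd_def by auto
    have c12: "card (sd A (Collect y1)) = 1" "card (sd A (Collect y2)) = 1"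
      using a1 hd[of w n y1] hd[of w n y2] w unfolding cube_adj_def by auto
    have ne: "Collect y1 \<noteq> Collect y2"
    proof
      assume "Collect y1 = Collect y2"
      hence "\<forall>i. y1 i = y2 i" by (metis mem_Collect_eq)
      thus False using y(3) by blast
    qed
    have mem: "Collect y1 \<in> F" "Collect y2 \<in> F" using y unfolding F_def by auto
    show "\<exists>B1\<in>F. \<exists>B2\<in>F. B1 \<noteq> B2 \<and> card (sd A B1) = 1 \<and> card (sd A B2) = 1"
    proof (rule bexI[of _ "Collect y1"], rule bexI[of _ "Collect y2"])
      show "Collect y1 \<noteq> Collect y2 \<and> card (sd A (Collect y1)) = 1 \<and> card (sd A (Collect y2)) = 1"
        using ne c12 by simp
    qed (rule mem)+
  qed
  have cov: "\<forall>i\<in>{1..n}. \<exists>A\<in>F. \<exists>B\<in>F. i \<in> A \<and> i \<notin> B"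
    using assms(3) unfolding covers_all_places_def F_def by fastforce
  obtain U W where UW: "U \<subseteq> {1..n}" "W \<subseteq> {1..n}" "card (sd U W) = 1"
      "\<forall>A\<in>F. card (sd A U) = 1 \<or> card (sd A W) = 1"
    using core[OF sub dist deg cov] n by auto
  define u where "u = (\<lambda>i. i \<in> U)"
  define w where "w = (\<lambda>i. i \<in> W)"
  have cu: "Collect u = U" "Collect w = W" unfolding u_def w_def by auto
  have uc: "u \<in> cube_vertices n" "w \<in> cube_vertices n"
    using UW unfolding u_def w_def cube_vertices_def by auto
  have adj: "cube_adj n u w" unfolding cube_adj_def using uc hd[OF uc] cu UW by simp
  define \<tau> where "\<tau> = nbhd n u \<union> nbhd n w"
  have fin: "finite (Collect x)" if "x \<in> cube_vertices n" for x
    using supp_sub[OF that] finite_subset by blast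
  have N: "x \<in> cube_vertices n \<and> card (sd U (Collect x)) = 1" if "x \<in> nbhd n u" for x
    using that hd[of u n x] uc cu unfolding nbhd_def cube_adj_def by auto
  have N': "x \<in> cube_vertices n \<and> card (sd W (Collect x)) = 1" if "x \<in> nbhd n w" for x
    using that hd[of w n x] uc cu unfolding nbhd_def cube_adj_def by auto
  have fU: "finite U" "finite W" using fin uc cu by auto
  have ts: "is_simplex n \<tau>"
    unfolding is_simplex_def
  proof (intro conjI ballI)
    show "\<tau> \<noteq> {}" using adj unfolding \<tau>_def nbhd_def by auto
    show "\<tau> \<subseteq> cube_vertices n" using N N' unfolding \<tau>_def by auto
    fix x y assume xy: "x \<in> \<tau>" "y \<in> \<tau>"
    have xc: "x \<in> cube_vertices n" "y \<in> cube_vertices n" using xy N N' unfolding \<tau>_def by auto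
    have "card (sd (Collect x) (Collect y)) \<le> 3"
    proof -
      have cx: "card (sd (Collect x) U) \<le> 1 \<and> card (sd (Collect x) W) \<le> 2 \<or>
                card (sd (Collect x) W) \<le> 1 \<and> card (sd (Collect x) U) \<le> 2"
      proof (cases "x \<in> nbhd n u")
        case True
        hence "card (sd (Collect x) U) = 1" using N sd_comm by metis
        moreover have "card (sd (Collect x) W) \<le> card (sd (Collect x) U) + card (sd U W)"
          using sd_tri[OF fin[OF xc(1)] fU(1) fU(2)] .
        ultimately show ?thesis using UW by simp
      next
        case False
        hence "x \<in> nbhd n w" using xy unfolding \<tau>_def by auto
        hence "card (sd (Collect x) W) = 1" using N' sd_comm by metis
        moreover have "card (sd (Collect x) U) \<le> card (sd (Collect x) W) + card (sd W U)"
          using sd_tri[OF fin[OF xc(1)] fU(2) fU(1)] .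
        moreover have "card (sd W U) = 1" using UW(3) sd_comm by metis
        ultimately show ?thesis by simp
      qed
      have cy: "card (sd U (Collect y)) = 1 \<or> card (sd W (Collect y)) = 1"
        using xy N N' unfolding \<tau>_def by auto
      have t1: "card (sd (Collect x) (Collect y)) \<le> card (sd (Collect x) U) + card (sd U (Collect y))"
        using sd_tri[OF fin[OF xc(1)] fU(1) fin[OF xc(2)]] .
      have t2: "card (sd (Collect x) (Collect y)) \<le> card (sd (Collect x) W) + card (sd W (Collect y))"
        using sd_tri[OF fin[OF xc(1)] fU(2) fin[OF xc(2)]] .
      show ?thesis using cx cy t1 t2 by linarith
    qed
    thus "hdist n x y \<le> 3" using hd[OF xc] by simp
  qed
  have "\<sigma> \<subseteq> \<tau>"
  proof
    fix z assume z: "z \<in> \<sigma>"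
    hence zc: "z \<in> cube_vertices n" using sc by blast
    have "Collect z \<in> F" using z unfolding F_def by blast
    hence "card (sd (Collect z) U) = 1 \<or> card (sd (Collect z) W) = 1" using UW by blast
    hence "hdist n u z = 1 \<or> hdist n w z = 1" using hd[OF uc(1) zc] hd[OF uc(2) zc] cu sd_comm by metis
    thus "z \<in> \<tau>" unfolding \<tau>_def nbhd_def cube_adj_def using uc zc by auto
  qed
  hence eq: "\<tau> = \<sigma>" using maxi ts by blast
  have "u \<in> \<sigma>" "w \<in> \<sigma>" using eq adj adj_sym[OF adj] unfolding \<tau>_def nbhd_def by auto
  thus ?thesis using adj eq unfolding \<tau>_def by blast
qed

end
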